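(* Let $N\ge 1$, let $\mathbf{A}=(A_{ij})\in\mathbb{R}^{N\times N}$ with $A_{ij}\ge 0$ for $i\neq j$ and $A_{ii}=0$, let $D_i=\sum_{j=1}^N A_{ij}$, $\mathbf{D}=\operatorname{diag}(D_1,\dots,D_N)$, let $\beta_1,\dots,\beta_N>0$, and set $\mathbf{H}=\mathbf{A}-\mathbf{D}-\operatorname{diag}(\beta_1,\dots,\beta_N)$; assume $\mathbf{H}$ is diagonalizable. Let $m\in\{1,\dots,N\}$, $I_0>0$, $\mathbf{Q}=I_0\mathbf{e}_m\mathbf{e}_m^\top$, and let $\mathbf{P}_\infty=\int_0^\infty e^{\mathbf{H}s}\mathbf{Q}e^{\mathbf{H}^\top s}\,ds$ (the unique solution of $\mathbf{H}\mathbf{P}_\infty+\mathbf{P}_\infty\mathbf{H}^\top+\mathbf{Q}=0$). Let $i,j\in\{1,\dots,N\}$ be such that each of $i$ and $j$ is reachable from $m$, i.e. equals $m$ or is the endpoint of a directed walk $m=w_0,\dots,w_n$ with $A_{w_{t+1}w_t}>0$ for all $t$. Then for every $\tau\ge 0$, $C_{ij}(\tau):=[e^{\mathbf{H}\tau}\mathbf{P}_\infty]_{ij}>0$.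
   Context: $\mathbf{C}(\tau)$ is the stationary covariance function $\mathbb{E}[\mathbf{x}(t)\mathbf{x}(t-\tau)^\top]$ of the linear SDE $d\mathbf{x}=\mathbf{H}\mathbf{x}\,dt+d\boldsymbol{\beta}(t)$, where $\boldsymbol{\beta}$ is a Brownian motion with $\mathbb{E}[d\boldsymbol\beta\, d\boldsymbol\beta^\top]=\mathbf{Q}\,dt$ (white noise of spectral density $I_0$ injected only at node $m$); for $\tau\ge 0$ it equals $e^{\mathbf{H}\tau}\mathbf{P}_\infty$. Diagonal entries are autocovariances and off-diagonal entries crosscovariances. *)

theory Defs
  imports "HOL-Analysis.Analysis"
begin

primrec mpow :: "'a::comm_ring_1 ^'n^'n \<Rightarrow> nat \<Rightarrow> 'a^'n^'n" where
  "mpow M 0 = mat 1"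
| "mpow M (Suc k) = M ** mpow M k"

definition mexp :: "real^'n^'n \<Rightarrow> real \<Rightarrow> real^'n^'n" where
  "mexp H t = (\<Sum>k. (t ^ k / fact k) *\<^sub>R mpow H k)"

definition diag_mat :: "('n \<Rightarrow> real) \<Rightarrow> real^'n^'n" where
  "diag_mat d = (\<chi> i j. if i = j then d i else 0)"

definition diagonalizable :: "real^'n^'n \<Rightarrow> bool" where
  "diagonalizable H \<longleftrightarrow>
     (\<exists>S Sinv :: complex^'n^'n. S ** Sinv = mat 1 \<and> Sinv ** S = mat 1 \<and>
        (\<forall>i j. i \<noteq> j \<longrightarrow> (Sinv ** (\<chi> a b. complex_of_real (H $ a $ b)) ** S) $ i $ j = 0))"

definition reachable :: "real^'n^'n \<Rightarrow> 'n \<Rightarrow> 'n \<Rightarrow> bool" where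
  "reachable A m k \<longleftrightarrow> (\<lambda>u v. 0 < A $ v $ u)\<^sup>*\<^sup>* m k"

end

theory Submission
  imports Defs
begin


lemma mat_mul_sum: "(X::real^'n^'n) ** (\<Sum>i\<in>S. f i) = (\<Sum>i\<in>S. X ** f i)"
proof (induction S rule: infinite_finite_induct)
  case (insert x F) then show ?case by (simp add: matrix_add_ldistrib)
qed auto

lemma mat_add_rdistrib: "((A::real^'n^'n) + B) ** C = A ** C + B ** C"
  by (vector matrix_matrix_mult_def sum.distrib[symmetric] field_simps)

lemma mpow_shift:
  fixes M :: "real^'n^'n"
  shows "mpow (M + d *\<^sub>R mat 1) k = (\<Sum>i\<le>k. (real (k choose i) * d^(k-i)) *\<^sub>R mpow M i)"
proof (induction k)
  case 0 then show ?case by simp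
next
  case (Suc k)
  define g where "g i = (real (k choose i) * d^(Suc k - i)) *\<^sub>R mpow M i" for i
  have "mpow (M + d *\<^sub>R mat 1) (Suc k) = M ** (\<Sum>i\<le>k. (real (k choose i) * d^(k-i)) *\<^sub>R mpow M i)
        + d *\<^sub>R (\<Sum>i\<le>k. (real (k choose i) * d^(k-i)) *\<^sub>R mpow M i)"
    using Suc by (simp add: mat_add_rdistrib scalar_matrix_assoc[symmetric])
  also have "M ** (\<Sum>i\<le>k. (real (k choose i) * d^(k-i)) *\<^sub>R mpow M i)
     = (\<Sum>i\<le>k. (real (k choose i) * d^(k-i)) *\<^sub>R mpow M (Suc i))"
    by (simp add: mat_mul_sum matrix_scalar_ac scalar_matrix_assoc)
  also have "d *\<^sub>R (\<Sum>i\<le>k. (real (k choose i) * d^(k-i)) *\<^sub>R mpow M i) = (\<Sum>i\<le>k. g i)"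
    unfolding g_def scaleR_sum_right
    by (intro sum.cong refl) (auto simp: Suc_diff_le mult_ac)
  also have "(\<Sum>i\<le>k. g i) = (\<Sum>i\<le>Suc k. g i)"
    by (simp add: g_def)
  also have "\<dots> = g 0 + (\<Sum>i\<le>k. g (Suc i))"
    by (rule sum.atMost_Suc_shift)
  finally have L: "mpow (M + d *\<^sub>R mat 1) (Suc k) = (\<Sum>i\<le>k. (real (k choose i) * d^(k-i)) *\<^sub>R mpow M (Suc i)) + (g 0 + (\<Sum>i\<le>k. g (Suc i)))" .
  have "(\<Sum>i\<le>Suc k. (real (Suc k choose i) * d^(Suc k-i)) *\<^sub>R mpow M i)
     = d^(Suc k) *\<^sub>R mat 1 + (\<Sum>i\<le>k. (real (Suc k choose Suc i) * d^(k-i)) *\<^sub>R mpow M (Suc i))"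
    by (simp add: sum.atMost_Suc_shift del: sum.atMost_Suc)
  also have "(\<Sum>i\<le>k. (real (Suc k choose Suc i) * d^(k-i)) *\<^sub>R mpow M (Suc i))
    = (\<Sum>i\<le>k. (real (k choose i) * d^(k-i)) *\<^sub>R mpow M (Suc i)) + (\<Sum>i\<le>k. g (Suc i))"
    by (simp add: g_def sum.distrib[symmetric] algebra_simps)
  finally show ?case unfolding L by (simp add: g_def)
qed



lemma mpow_entry_bound:
  fixes X :: "real^'n^'n"
  assumes "\<And>a b. \<bar>X$a$b\<bar> \<le> x"
  shows "\<bar>mpow X k $a$b\<bar> \<le> (real CARD('n) * x)^k"
proof (induction k arbitrary: a b)
  case 0 then show ?case by (simp add: mat_def)
next
  case (Suc k)
  have x0: "0 \<le> x" using assms[of a a] by linarith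
  have "\<bar>mpow X (Suc k) $a$b\<bar> = \<bar>\<Sum>u\<in>UNIV. X$a$u * mpow X k $u$b\<bar>"
    by (simp add: matrix_matrix_mult_def)
  also have "\<dots> \<le> (\<Sum>u\<in>(UNIV::'n set). x * (real CARD('n) * x)^k)"
    by (rule order_trans[OF sum_abs sum_mono])
       (auto simp: abs_mult intro!: mult_mono Suc assms x0)
  also have "\<dots> = (real CARD('n) * x)^(Suc k)" by simp
  finally show ?case .
qed

lemma norm_mat_le: "norm (Y::real^'n^'n) \<le> (\<Sum>a\<in>UNIV. \<Sum>b\<in>UNIV. \<bar>Y$a$b\<bar>)"
proof -
  have "norm Y \<le> (\<Sum>a\<in>UNIV. norm (Y$a))"
    unfolding norm_vec_def by (rule L2_set_le_sum) simp
  also have "\<dots> \<le> (\<Sum>a\<in>UNIV. \<Sum>b\<in>UNIV. \<bar>Y$a$b\<bar>)"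
    by (intro sum_mono) (simp add: norm_le_l1_cart)
  finally show ?thesis .
qed

definition "eb (X::real^'n^'n) = (\<Sum>a\<in>UNIV. \<Sum>b\<in>UNIV. \<bar>X$a$b\<bar>)"

lemma entry_le_eb: "\<bar>(X::real^'n^'n)$a$b\<bar> \<le> eb X"
proof -
  have "\<bar>X$a$b\<bar> \<le> (\<Sum>b\<in>UNIV. \<bar>X$a$b\<bar>)" by (rule member_le_sum) auto
  also have "\<dots> \<le> eb X" unfolding eb_def
    by (rule member_le_sum[of _ _ "\<lambda>a. \<Sum>b\<in>UNIV. \<bar>X$a$b\<bar>"]) (auto intro: sum_nonneg)
  finally show ?thesis .
qed

lemma mexp_summable:
  fixes X :: "real^'n^'n"
  shows "summable (\<lambda>k. (t^k/fact k) *\<^sub>R mpow X k)"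
proof -
  define c where "c = real CARD('n) * eb X"
  have "summable (\<lambda>k. (real CARD('n) * real CARD('n)) * (inverse (fact k) * (\<bar>t\<bar> * c)^k))"
    by (intro summable_mult summable_exp)
  then show ?thesis
  proof (rule summable_comparison_test'[where N=0])
    fix k :: nat
    have "norm ((t^k/fact k) *\<^sub>R mpow X k) = (\<bar>t\<bar>^k/fact k) * norm (mpow X k)"
      by (simp add: power_abs)
    also have "\<dots> \<le> (\<bar>t\<bar>^k/fact k) * (\<Sum>a\<in>(UNIV::'n set). \<Sum>b\<in>(UNIV::'n set). c^k)"
      by (intro mult_left_mono order_trans[OF norm_mat_le] sum_mono)
         (auto simp: c_def intro!: mpow_entry_bound entry_le_eb)
    also have "\<dots> = (real CARD('n) * real CARD('n)) * (inverse (fact k) * (\<bar>t\<bar> * c)^k)"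
      by (simp add: power_mult_distrib field_simps)
    finally show "norm ((t^k/fact k) *\<^sub>R mpow X k) \<le> (real CARD('n) * real CARD('n)) * (inverse (fact k) * (\<bar>t\<bar> * c)^k)" .
  qed
qed

lemma mexp_entry:
  fixes X :: "real^'n^'n"
  shows "mexp X t $a$b = (\<Sum>k. (t^k/fact k) * mpow X k $a$b)"
    and "summable (\<lambda>k. (t^k/fact k) * mpow X k $a$b)"
proof -
  have bl: "bounded_linear (\<lambda>Y::real^'n^'n. Y$a$b)"
    using bounded_linear_compose[OF bounded_linear_vec_nth bounded_linear_vec_nth] .
  show "mexp X t $a$b = (\<Sum>k. (t^k/fact k) * mpow X k $a$b)"
    unfolding mexp_def using bounded_linear.suminf[OF bl mexp_summable] by simp
  show "summable (\<lambda>k. (t^k/fact k) * mpow X k $a$b)"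
    using bounded_linear.summable[OF bl mexp_summable] by simp
qed



lemma mexp_abs_summable:
  fixes X :: "real^'n^'n"
  shows "summable (\<lambda>k. norm ((t^k/fact k) * mpow X k $a$b))"
proof -
  define c where "c = real CARD('n) * eb X"
  have "summable (\<lambda>k. inverse (fact k) * (\<bar>t\<bar> * c)^k)"
    by (intro summable_exp)
  then show ?thesis
  proof (rule summable_comparison_test'[where N=0])
    fix k :: nat
    have "norm (norm ((t^k/fact k) * mpow X k $a$b)) = (\<bar>t\<bar>^k/fact k) * \<bar>mpow X k $a$b\<bar>"
      by (simp add: power_abs abs_mult)
    also have "\<dots> \<le> (\<bar>t\<bar>^k/fact k) * c^k"
      by (intro mult_left_mono) (auto simp: c_def intro!: mpow_entry_bound entry_le_eb)
    also have "\<dots> = inverse (fact k) * (\<bar>t\<bar> * c)^k"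
      by (simp add: power_mult_distrib field_simps)
    finally show "norm (norm ((t^k/fact k) * mpow X k $a$b)) \<le> inverse (fact k) * (\<bar>t\<bar> * c)^k" .
  qed
qed

lemma mexp_shift:
  fixes M :: "real^'n^'n"
  shows "mexp (M + d *\<^sub>R mat 1) t $a$b = mexp M t $a$b * exp (d*t)"
proof -
  have e: "exp (d*t) = (\<Sum>l. (d*t)^l / fact l)"
    unfolding exp_def by (simp add: divide_inverse mult.commute)
  have sn: "summable (\<lambda>l. norm ((d*t)^l / fact l))"
    using summable_norm_exp[of "d*t"] by (simp add: divide_inverse mult.commute)
  have "mexp M t $a$b * exp (d*t) =
     (\<Sum>k. \<Sum>i\<le>k. ((t^i/fact i) * mpow M i $a$b) * ((d*t)^(k-i) / fact (k-i)))"
    unfolding mexp_entry(1) e by (rule Cauchy_product[OF mexp_abs_summable sn])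
  also have "\<dots> = (\<Sum>k. (t^k/fact k) * mpow (M + d *\<^sub>R mat 1) k $a$b)"
  proof (intro suminf_cong)
    fix k
    have "(\<Sum>i\<le>k. ((t^i/fact i) * mpow M i $a$b) * ((d*t)^(k-i) / fact (k-i)))
       = (\<Sum>i\<le>k. (t^k/fact k) * ((real (k choose i) * d^(k-i)) * mpow M i $a$b))"
    proof (intro sum.cong refl)
      fix i assume "i \<in> {..k}"
      then have ik: "i \<le> k" by simp
      have tk: "t^k = t^i * t^(k-i)" using ik by (simp flip: power_add)
      show "((t^i/fact i) * mpow M i $a$b) * ((d*t)^(k-i) / fact (k-i))
           = (t^k/fact k) * ((real (k choose i) * d^(k-i)) * mpow M i $a$b)"
        unfolding tk binomial_fact[OF ik] by (simp add: power_mult_distrib field_simps)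
    qed
    also have "\<dots> = (t^k/fact k) * mpow (M + d *\<^sub>R mat 1) k $a$b"
      by (simp add: mpow_shift sum_distrib_left)
    finally show "(\<Sum>i\<le>k. ((t^i/fact i) * mpow M i $a$b) * ((d*t)^(k-i) / fact (k-i)))
       = (t^k/fact k) * mpow (M + d *\<^sub>R mat 1) k $a$b" .
  qed
  also have "\<dots> = mexp (M + d *\<^sub>R mat 1) t $a$b" by (simp add: mexp_entry(1))
  finally show ?thesis ..
qed



lemma mpow_nonneg:
  fixes M :: "real^'n^'n"
  assumes "\<And>a b. 0 \<le> M$a$b"
  shows "0 \<le> mpow M k $a$b"
proof (induction k arbitrary: a b)
  case 0 then show ?case by (simp add: mat_def)
next
  case (Suc k) then show ?case
    by (simp add: matrix_matrix_mult_def assms sum_nonneg)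
qed

lemma mpow_rowsum:
  fixes M :: "real^'n^'n"
  assumes nn: "\<And>a b. 0 \<le> M$a$b" and rs: "\<And>a. (\<Sum>b\<in>UNIV. M$a$b) \<le> r"
  shows "(\<Sum>b\<in>UNIV. mpow M k $a$b) \<le> r^k"
proof (induction k arbitrary: a)
  case 0 then show ?case by (simp add: mat_def)
next
  case (Suc k)
  have r0: "0 \<le> r" using rs[of a] sum_nonneg[of UNIV "\<lambda>b. M$a$b"] nn by fastforce
  have "(\<Sum>b\<in>UNIV. mpow M (Suc k) $a$b) = (\<Sum>u\<in>UNIV. M$a$u * (\<Sum>b\<in>UNIV. mpow M k $u$b))"
    by (simp add: matrix_matrix_mult_def sum_distrib_left) (rule sum.swap)
  also have "\<dots> \<le> (\<Sum>u\<in>UNIV. M$a$u * r^k)"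
    by (intro sum_mono mult_left_mono Suc nn)
  also have "\<dots> = (\<Sum>u\<in>UNIV. M$a$u) * r^k" by (simp add: sum_distrib_right)
  also have "\<dots> \<le> r * r^k" by (intro mult_right_mono rs) (simp add: r0)
  finally show ?case by simp
qed

lemma mexp_nonneg:
  fixes M :: "real^'n^'n"
  assumes "\<And>a b. 0 \<le> M$a$b" "0 \<le> t"
  shows "0 \<le> mexp M t $a$b"
  unfolding mexp_entry(1)
  by (intro suminf_nonneg mexp_entry(2)) (simp add: assms mpow_nonneg)

lemma mexp_ge_term:
  fixes M :: "real^'n^'n"
  assumes "\<And>a b. 0 \<le> M$a$b" "0 \<le> t"
  shows "(t^k/fact k) * mpow M k $a$b \<le> mexp M t $a$b"
proof -
  have "(t^k/fact k) * mpow M k $a$b \<le> (\<Sum>i<Suc k. (t^i/fact i) * mpow M i $a$b)"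
    by (rule member_le_sum[of k "{..<Suc k}" "\<lambda>i. (t^i/fact i) * mpow M i $a$b"])
       (auto simp: assms mpow_nonneg)
  also have "\<dots> \<le> mexp M t $a$b"
    unfolding mexp_entry(1)
    by (intro sum_le_suminf mexp_entry(2)) (auto simp: assms mpow_nonneg)
  finally show ?thesis .
qed

lemma mexp_le:
  fixes M :: "real^'n^'n"
  assumes nn: "\<And>a b. 0 \<le> M$a$b" and rs: "\<And>a. (\<Sum>b\<in>UNIV. M$a$b) \<le> r" and t: "0 \<le> t"
  shows "mexp M t $a$b \<le> exp (r*t)"
proof -
  have "mexp M t $a$b \<le> (\<Sum>b\<in>UNIV. mexp M t $a$b)"
    by (rule member_le_sum) (auto intro: mexp_nonneg nn t)
  also have "\<dots> = (\<Sum>k. \<Sum>b\<in>UNIV. (t^k/fact k) * mpow M k $a$b)"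
    unfolding mexp_entry(1) by (rule suminf_sum[symmetric]) (rule mexp_entry(2))
  also have "\<dots> \<le> (\<Sum>k. (r*t)^k / fact k)"
  proof (rule suminf_le)
    fix k
    have "(\<Sum>b\<in>UNIV. (t^k/fact k) * mpow M k $a$b) = (t^k/fact k) * (\<Sum>b\<in>UNIV. mpow M k $a$b)"
      by (simp add: sum_distrib_left)
    also have "\<dots> \<le> (t^k/fact k) * r^k"
      by (intro mult_left_mono mpow_rowsum nn rs) (simp add: t)
    finally show "(\<Sum>b\<in>UNIV. (t^k/fact k) * mpow M k $a$b) \<le> (r*t)^k / fact k"
      by (simp add: power_mult_distrib field_simps)
  next
    show "summable (\<lambda>k. \<Sum>b\<in>UNIV. (t^k/fact k) * mpow M k $a$b)"
      by (intro summable_sum mexp_entry(2))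
    show "summable (\<lambda>k. (r*t)^k / fact k)"
      using summable_exp[of "r*t"] by (simp add: divide_inverse mult.commute)
  qed
  also have "\<dots> = exp (r*t)"
    unfolding exp_def by (simp add: divide_inverse mult.commute)
  finally show ?thesis .
qed

lemma path_pos:
  fixes M :: "real^'n^'n"
  assumes nn: "\<And>a b. 0 \<le> M$a$b"
    and p: "(\<lambda>u v. 0 < M$v$u)\<^sup>*\<^sup>* m v"
  shows "\<exists>k. 0 < mpow M k $v$m"
  using p
proof (induction rule: rtranclp_induct)
  case base
  then show ?case by (intro exI[of _ 0]) (simp add: mat_def)
next
  case (step u w)
  then obtain k where k: "0 < mpow M k $u$m" by blast
  have "M$w$u * mpow M k $u$m \<le> (\<Sum>x\<in>UNIV. M$w$x * mpow M k $x$m)"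
    by (rule member_le_sum[of u UNIV "\<lambda>x. M$w$x * mpow M k $x$m"])
       (auto intro!: mult_nonneg_nonneg nn mpow_nonneg)
  moreover have "0 < M$w$u * mpow M k $u$m" using step(2) k by simp
  ultimately have "0 < mpow M (Suc k) $w$m"
    by (simp add: matrix_matrix_mult_def)
  then show ?case by blast
qed

lemma mexp_cont:
  fixes X :: "real^'n^'n"
  shows "continuous_on S (\<lambda>t. mexp X t $a$b)"
proof (rule continuous_at_imp_continuous_on, rule ballI)
  fix x assume "x \<in> S"
  define K where "K = \<bar>x\<bar> + 1"
  have eq: "(\<lambda>t. mexp X t $a$b) = (\<lambda>t. \<Sum>n. (mpow X n $a$b / fact n) * t^n)"
    by (rule ext) (simp add: mexp_entry(1) field_simps)
  have "summable (\<lambda>n. (mpow X n $a$b / fact n) * K^n)"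
    using mexp_entry(2)[of K X a b] by (simp add: field_simps)
  then have "isCont (\<lambda>t. \<Sum>n. (mpow X n $a$b / fact n) * t^n) x"
    by (rule isCont_powser) (simp add: K_def)
  then show "isCont (\<lambda>t. mexp X t $a$b) x" by (simp add: eq)
qed



theorem lemma4:
  fixes A :: "real^'n^'n" and \<beta> :: "'n \<Rightarrow> real" and I0 :: real
    and m i j :: 'n and \<tau> :: real
  assumes A_offdiag: "\<forall>a b. a \<noteq> b \<longrightarrow> 0 \<le> A $ a $ b"
    and A_diag: "\<forall>a. A $ a $ a = 0"
    and beta_pos: "\<forall>a. 0 < \<beta> a"
    and H_diag: "diagonalizable (A - diag_mat (\<lambda>a. \<Sum>b\<in>UNIV. A $ a $ b) - diag_mat \<beta>)"
    and I0_pos: "0 < I0"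
    and reach_i: "reachable A m i"
    and reach_j: "reachable A m j"
    and tau: "0 \<le> \<tau>"
  shows "let H = A - diag_mat (\<lambda>a. \<Sum>b\<in>UNIV. A $ a $ b) - diag_mat \<beta>;
             Q = (\<chi> a b. if a = m \<and> b = m then I0 else 0) :: real^'n^'n;
             P = integral {0..} (\<lambda>s. mexp H s ** Q ** transpose (mexp H s))
         in 0 < (mexp H \<tau> ** P) $ i $ j"
proof -
  define D where "D a = (\<Sum>b\<in>UNIV. A $ a $ b)" for a
  define H where "H = A - diag_mat (\<lambda>a. \<Sum>b\<in>UNIV. A $ a $ b) - diag_mat \<beta>"
  define Q :: "real^'n^'n" where "Q = (\<chi> a b. if a = m \<and> b = m then I0 else 0)"
  define F where "F s = mexp H s ** Q ** transpose (mexp H s)" for s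
  define P where "P = integral {0..} F"
  have Ann: "0 \<le> A$a$b" for a b using A_offdiag A_diag by (cases "a = b") auto
  have Dnn: "0 \<le> D a" for a unfolding D_def by (intro sum_nonneg) (simp add: Ann)
  define bmin where "bmin = Min (range \<beta>)"
  have bmin_pos: "0 < bmin" unfolding bmin_def using beta_pos by (subst Min_gr_iff) auto
  have bmin_le: "bmin \<le> \<beta> a" for a unfolding bmin_def by (rule Min_le) auto
  define c where "c = (\<Sum>a\<in>UNIV. D a + \<beta> a)"
  have c_ge: "D a + \<beta> a \<le> c" for a unfolding c_def
    by (rule member_le_sum[of a UNIV "\<lambda>a. D a + \<beta> a"]) (use Dnn beta_pos in \<open>auto intro: add_nonneg_nonneg less_imp_le\<close>)
  define M where "M = H + c *\<^sub>R mat 1"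
  have Mab: "M$a$b = A$a$b + (if a = b then c - D a - \<beta> a else 0)" for a b
    using A_diag by (simp add: M_def H_def diag_mat_def mat_def D_def)
  have Mnn: "0 \<le> M$a$b" for a b using c_ge[of a] Ann[of a b] by (cases "a = b") (auto simp: Mab)
  have Mrs: "(\<Sum>b\<in>UNIV. M$a$b) \<le> c - bmin" for a
  proof -
    have "(\<Sum>b\<in>UNIV. M$a$b) = D a + (c - D a - \<beta> a)"
      by (simp add: Mab sum.distrib D_def)
    then show ?thesis using bmin_le[of a] by simp
  qed
  have HM: "H = M + (-c) *\<^sub>R mat 1" by (simp add: M_def)
  have E_eq: "mexp H t $a$b = mexp M t $a$b * exp (-c*t)" for t a b
    unfolding HM by (rule mexp_shift)
  have E_nn: "0 \<le> mexp H t $a$b" if "0 \<le> t" for t a b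
    unfolding E_eq using mexp_nonneg[OF Mnn that] by simp
  have E_le: "mexp H t $a$b \<le> exp (-bmin*t)" if "0 \<le> t" for t a b
  proof -
    have "mexp H t $a$b \<le> exp ((c - bmin)*t) * exp (-c*t)"
      unfolding E_eq by (intro mult_right_mono mexp_le[OF Mnn Mrs that]) simp
    also have "\<dots> = exp (-bmin*t)" by (simp flip: exp_add add: algebra_simps)
    finally show ?thesis .
  qed
  have E_diag: "0 < mexp H t $a$a" if "0 \<le> t" for t a
  proof -
    have "(t^0/fact 0) * mpow M 0 $a$a \<le> mexp M t $a$a" by (rule mexp_ge_term[OF Mnn that])
    then have "0 < mexp M t $a$a" by (simp add: mat_def)
    then show ?thesis unfolding E_eq by simp
  qed
  have E_reach: "0 < mexp H t $v$m" if "reachable A m v" "0 < t" for t v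
  proof -
    have "(\<lambda>u v. 0 < M$v$u)\<^sup>*\<^sup>* m v"
      using that(1) unfolding reachable_def
    proof (rule rtranclp_mono[THEN predicate2D, rotated])
      show "(\<lambda>u v. 0 < A$v$u) \<le> (\<lambda>u v. 0 < M$v$u)"
      proof (intro predicate2I)
        fix u w assume "0 < A$w$u"
        moreover then have "w \<noteq> u" using A_diag by auto
        ultimately show "0 < M$w$u" by (simp add: Mab)
      qed
    qed
    then obtain k where k: "0 < mpow M k $v$m" using path_pos[OF Mnn] by blast
    have "(t^k/fact k) * mpow M k $v$m \<le> mexp M t $v$m"
      using that(2) by (intro mexp_ge_term[OF Mnn]) simp
    moreover have "0 < (t^k/fact k) * mpow M k $v$m" using k that(2) by simp
    ultimately have "0 < mexp M t $v$m" by linarith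
    then show ?thesis unfolding E_eq by simp
  qed
  define f where "f k j s = I0 * mexp H s $k$m * mexp H s $j$m" for k j s
  have XQ: "(X ** Q)$k$u = (if u = m then X$k$m * I0 else 0)" for X :: "real^'n^'n" and k u
    by (cases "u = m") (simp_all add: Q_def matrix_matrix_mult_def if_distrib sum.delta' cong: if_cong)
  have Fent: "F s $k$j = f k j s" for s k j
  proof -
    have YT: "(Y ** transpose X)$k$j = (\<Sum>u\<in>UNIV. Y$k$u * X$j$u)" for X Y :: "real^'n^'n"
      by (simp add: matrix_matrix_mult_def transpose_def)
    show ?thesis unfolding F_def YT XQ
    proof -
      have "(\<Sum>u\<in>UNIV. (if u = m then mexp H s $ k $ m * I0 else 0) * mexp H s $ j $ u)
          = (\<Sum>u\<in>UNIV. if u = m then mexp H s $ k $ m * I0 * mexp H s $ j $ u else 0)"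
        by (intro sum.cong) auto
      then show "(\<Sum>u\<in>UNIV. (if u = m then mexp H s $ k $ m * I0 else 0) * mexp H s $ j $ u) = f k j s"
        by (simp add: f_def)
    qed
  qed
  have Feq: "F = (\<lambda>s. \<chi> k j. f k j s)"
    by (rule ext) (simp add: vec_eq_iff Fent)
  have fcont: "continuous_on S (f k j)" for S k j
    unfolding f_def[abs_def] by (intro continuous_intros mexp_cont)
  have Fcont: "continuous_on {0..} F"
    unfolding Feq by (intro continuous_on_vec_lambda fcont)
  have f_nn: "0 \<le> f k j s" if "0 \<le> s" for k j s
    unfolding f_def using E_nn[OF that] I0_pos by simp
  have f_le: "f k j s \<le> I0 * exp (- bmin * s)" if "0 \<le> s" for k j s
  proof -
    have e1: "exp (- bmin * s) \<le> 1" using bmin_pos that by simp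
    have "mexp H s $k$m * mexp H s $j$m \<le> exp (- bmin * s) * 1"
      by (intro mult_mono E_le E_nn that order_trans[OF E_le[OF that] e1]) simp
    then show ?thesis unfolding f_def using I0_pos
      by (simp add: mult.assoc)
  qed
  have lebS: "{0::real..} \<in> sets lebesgue" by simp
  have eint: "(\<lambda>s. exp (- bmin * s)) integrable_on {0..}"
    using has_integral_exp_minus_to_infinity[OF bmin_pos, of 0] by (auto simp: integrable_on_def)
  have gint: "(\<lambda>s. (real CARD('n) * real CARD('n) * I0) * exp (- bmin * s)) integrable_on {0..}"
    using integrable_cmul[OF eint, of "real CARD('n) * real CARD('n) * I0"] by simp
  have Fint: "F integrable_on {0..}"
  proof -
    have "F absolutely_integrable_on {0..}"
    proof (rule measurable_bounded_by_integrable_imp_absolutely_integrable[OF _ lebS gint])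
      show "F \<in> borel_measurable (lebesgue_on {0..})"
        by (rule continuous_imp_measurable_on_sets_lebesgue[OF Fcont lebS])
      fix s :: real assume "s \<in> {0..}"
      then have s: "0 \<le> s" by simp
      have "norm (F s) \<le> (\<Sum>a\<in>(UNIV::'n set). \<Sum>b\<in>(UNIV::'n set). I0 * exp (- bmin * s))"
        by (rule order_trans[OF norm_mat_le sum_mono[OF sum_mono]])
           (use f_le[OF s] in \<open>simp add: Fent f_nn[OF s]\<close>)
      then show "norm (F s) \<le> (real CARD('n) * real CARD('n) * I0) * exp (- bmin * s)"
        by (simp add: mult_ac)
    qed
    then show ?thesis by (simp add: absolutely_integrable_on_def)
  qed
  have bl: "bounded_linear (\<lambda>Y::real^'n^'n. Y$a$b)" for a b
    using bounded_linear_compose[OF bounded_linear_vec_nth bounded_linear_vec_nth] .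
  have fint: "f k j integrable_on {0..}" for k j
    using integrable_linear[OF Fint bl[of k j]] by (simp add: o_def Fent)
  have Pent: "P$k$j = integral {0..} (f k j)" for k j
    using integral_linear[OF Fint bl[of k j]] by (simp add: o_def Fent P_def)
  have P_nn: "0 \<le> P$k$j" for k j
    unfolding Pent by (rule integral_nonneg[OF fint]) (simp add: f_nn)
  have P_pos: "0 < P$i$j"
  proof -
    have f1: "0 < f i j 1"
      unfolding f_def using E_reach[OF reach_i] E_reach[OF reach_j] I0_pos by simp
    have int01: "f i j integrable_on {0..1}"
      by (rule integrable_continuous_interval[OF fcont])
    have "integral {0..1} (f i j) \<le> integral {0..} (f i j)"
      by (rule integral_subset_le[OF _ int01 fint]) (auto simp: f_nn)
    moreover have "0 < integral {0..1} (f i j)"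
    proof -
      have "0 \<le> integral {0..1} (f i j)" by (rule integral_nonneg[OF int01]) (simp add: f_nn)
      moreover have "integral {0..1} (f i j) \<noteq> 0"
      proof
        assume h0: "integral {0..1} (f i j) = 0"
        have "(f i j has_integral 0) (cbox 0 1)"
          using integrable_integral[OF int01] h0 by (simp add: cbox_interval)
        then have "f i j 1 = 0"
          by (intro has_integral_0_cbox_imp_0[OF fcont]) (auto simp: f_nn)
        then show False using f1 by simp
      qed
      ultimately show ?thesis by simp
    qed
    ultimately show ?thesis unfolding Pent by simp
  qed
  have "mexp H \<tau> $i$i * P$i$j \<le> (\<Sum>k\<in>UNIV. mexp H \<tau> $i$k * P$k$j)"
    by (rule member_le_sum[of i UNIV "\<lambda>k. mexp H \<tau> $i$k * P$k$j"])
       (auto intro!: mult_nonneg_nonneg E_nn tau P_nn)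
  moreover have "0 < mexp H \<tau> $i$i * P$i$j" using E_diag[OF tau] P_pos by simp
  ultimately have "0 < (mexp H \<tau> ** P)$i$j" by (simp add: matrix_matrix_mult_def)
  then show ?thesis by (simp add: Let_def H_def Q_def P_def F_def[abs_def])
qed


end
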